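(* Let $(E,\rho)$ be a complete partial $v$-generalized metric space and let $S:E\to E$ satisfy $\rho(Su,Sw)\le\lambda[\rho(u,Su)+\rho(w,Sw)]$ for all $u,w\in E$, where $\lambda\in[0,\tfrac12)$. Then $S$ has a unique fixed point $b\in E$, and $\rho(b,b)=0$.
   Context: Let $E$ be a nonempty set and $v\in\mathbb{N}$. $(E,\rho)$, with $\rho:E\times E\to[0,\infty)$, is a partial $v$-generalized metric space if for all $u,w,z_1,\dots,z_v\in E$: (1) $u=w$ iff $\rho(u,u)=\rho(u,w)=\rho(w,w)$; (2) $\rho(u,u)\le\rho(u,w)$; (3) $\rho(u,w)=\rho(w,u)$; (4) $\rho(u,w)\le\rho(u,z_1)+\rho(z_1,z_2)+\dots+\rho(z_{v-1},z_v)+\rho(z_v,w)-\sum_{i=1}^v\rho(z_i,z_i)$. A sequence $\{u_n\}$ in $E$ converges to $u\in E$ if $\lim_{n\to\infty}\rho(u_n,u)=\rho(u,u)$; it is Cauchy if $\lim_{n,m\to\infty}\rho(u_n,u_m)$ exists and is finite. $(E,\rho)$ is complete if for every Cauchy sequence $\{u_n\}$ there is $u\in E$ with $\lim_{n,m\to\infty}\rho(u_n,u_m)=\lim_{n\to\infty}\rho(u_n,u)=\rho(u,u)$. *)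

theory Defs
  imports Complex_Main
begin

text \<open>The intermediate points
  z_1,...,z_v are given as a function z on indices 1..v (with z 0 = u, z (v+1) = w
  implicitly via the explicit end terms).\<close>

definition partial_v_gen_metric :: "nat \<Rightarrow> 'a set \<Rightarrow> ('a \<Rightarrow> 'a \<Rightarrow> real) \<Rightarrow> bool" where
  "partial_v_gen_metric v E \<rho> \<longleftrightarrow>
     E \<noteq> {} \<and> v \<ge> 1 \<and>
     (\<forall>u\<in>E. \<forall>w\<in>E. \<rho> u w \<ge> 0) \<and>
     (\<forall>u\<in>E. \<forall>w\<in>E. u = w \<longleftrightarrow> (\<rho> u u = \<rho> u w \<and> \<rho> u w = \<rho> w w)) \<and>
     (\<forall>u\<in>E. \<forall>w\<in>E. \<rho> u u \<le> \<rho> u w) \<and>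
     (\<forall>u\<in>E. \<forall>w\<in>E. \<rho> u w = \<rho> w u) \<and>
     (\<forall>u\<in>E. \<forall>w\<in>E. \<forall>z. (\<forall>i\<in>{1..v}. z i \<in> E) \<longrightarrow>
        \<rho> u w \<le> \<rho> u (z 1) + (\<Sum>i=1..<v. \<rho> (z i) (z (Suc i))) + \<rho> (z v) w
                  - (\<Sum>i=1..v. \<rho> (z i) (z i)))"

definition pvgm_converges :: "('a \<Rightarrow> 'a \<Rightarrow> real) \<Rightarrow> (nat \<Rightarrow> 'a) \<Rightarrow> 'a \<Rightarrow> bool" where
  "pvgm_converges \<rho> x u \<longleftrightarrow> (\<lambda>n. \<rho> (x n) u) \<longlonglongrightarrow> \<rho> u u"

definition pvgm_double_lim :: "('a \<Rightarrow> 'a \<Rightarrow> real) \<Rightarrow> (nat \<Rightarrow> 'a) \<Rightarrow> real \<Rightarrow> bool" where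
  "pvgm_double_lim \<rho> x L \<longleftrightarrow>
     ((\<lambda>(n, m). \<rho> (x n) (x m)) \<longlongrightarrow> L) (sequentially \<times>\<^sub>F sequentially)"

definition pvgm_cauchy :: "('a \<Rightarrow> 'a \<Rightarrow> real) \<Rightarrow> (nat \<Rightarrow> 'a) \<Rightarrow> bool" where
  "pvgm_cauchy \<rho> x \<longleftrightarrow> (\<exists>L. pvgm_double_lim \<rho> x L)"

definition pvgm_complete :: "'a set \<Rightarrow> ('a \<Rightarrow> 'a \<Rightarrow> real) \<Rightarrow> bool" where
  "pvgm_complete E \<rho> \<longleftrightarrow>
     (\<forall>x. (\<forall>n. x n \<in> E) \<longrightarrow> pvgm_cauchy \<rho> x \<longrightarrow>
        (\<exists>u\<in>E. pvgm_double_lim \<rho> x (\<rho> u u) \<and> pvgm_converges \<rho> x u))"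

end

theory Submission
  imports Defs
begin

lemma tri:
  assumes "partial_v_gen_metric v E \<rho>" "u \<in> E" "w \<in> E" "c \<in> E"
  shows "\<rho> u w \<le> \<rho> u c + \<rho> c w"
proof -
  have v1: "v \<ge> 1" and nn: "\<rho> c c \<ge> 0" using assms unfolding partial_v_gen_metric_def by auto
  have "\<rho> u w \<le> \<rho> u ((\<lambda>_. c) 1) + (\<Sum>i=1..<v. \<rho> ((\<lambda>_. c) i) ((\<lambda>_. c) (Suc i))) + \<rho> ((\<lambda>_. c) v) w
                  - (\<Sum>i=1..v. \<rho> ((\<lambda>_. c) i) ((\<lambda>_. c) i))"
  proof -
    have "\<forall>u\<in>E. \<forall>w\<in>E. \<forall>z. (\<forall>i\<in>{1..v}. z i \<in> E) \<longrightarrow>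
        \<rho> u w \<le> \<rho> u (z 1) + (\<Sum>i=1..<v. \<rho> (z i) (z (Suc i))) + \<rho> (z v) w
                  - (\<Sum>i=1..v. \<rho> (z i) (z i))"
      using assms(1) unfolding partial_v_gen_metric_def by blast
    from this[rule_format, OF assms(2,3), of "\<lambda>_. c"] show ?thesis using assms(4) by simp
  qed
  hence "\<rho> u w \<le> \<rho> u c + real (v - 1) * \<rho> c c + \<rho> c w - real v * \<rho> c c" by simp
  moreover have "real (v - 1) * \<rho> c c \<le> real v * \<rho> c c" using nn v1
    by (intro mult_right_mono) auto
  ultimately show ?thesis by linarith
qed

theorem mainTheorem6:
  fixes E :: "'a set" and \<rho> :: "'a \<Rightarrow> 'a \<Rightarrow> real" and v :: nat
    and S :: "'a \<Rightarrow> 'a" and lam :: real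
  assumes "partial_v_gen_metric v E \<rho>"
    and "pvgm_complete E \<rho>"
    and "\<forall>u\<in>E. S u \<in> E"
    and "0 \<le> lam" and "lam < 1/2"
    and "\<forall>u\<in>E. \<forall>w\<in>E. \<rho> (S u) (S w) \<le> lam * (\<rho> u (S u) + \<rho> w (S w))"
  shows "(\<exists>!b. b \<in> E \<and> S b = b) \<and> (\<forall>b\<in>E. S b = b \<longrightarrow> \<rho> b b = 0)"
proof -
  note M = assms(1)[unfolded partial_v_gen_metric_def]
  have nonneg: "\<And>u w. u \<in> E \<Longrightarrow> w \<in> E \<Longrightarrow> \<rho> u w \<ge> 0" using M by blast
  have eqI: "\<And>u w. u \<in> E \<Longrightarrow> w \<in> E \<Longrightarrow> \<rho> u u = \<rho> u w \<Longrightarrow> \<rho> u w = \<rho> w w \<Longrightarrow> u = w"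
    using M by blast
  have small: "\<And>u w. u \<in> E \<Longrightarrow> w \<in> E \<Longrightarrow> \<rho> u u \<le> \<rho> u w" using M by blast
  have sym: "\<And>u w. u \<in> E \<Longrightarrow> w \<in> E \<Longrightarrow> \<rho> u w = \<rho> w u" using M by blast
  have contr: "\<And>u w. u \<in> E \<Longrightarrow> w \<in> E \<Longrightarrow> \<rho> (S u) (S w) \<le> lam * (\<rho> u (S u) + \<rho> w (S w))"
    using assms(6) by blast
  have SE: "\<And>u. u \<in> E \<Longrightarrow> S u \<in> E" using assms(3) by blast
  have fp0: "\<rho> b b = 0" if "b \<in> E" "S b = b" for b
  proof -
    have "\<rho> b b \<ge> 0" using nonneg that by blast
    have "\<rho> b b \<le> lam * (\<rho> b b + \<rho> b b)" using contr[OF that(1) that(1)] that(2) by simp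
    hence "(1 - 2*lam) * \<rho> b b \<le> 0" by (simp add: algebra_simps)
    moreover have "1 - 2*lam > 0" using assms(5) by simp
    ultimately show ?thesis using \<open>\<rho> b b \<ge> 0\<close> by (smt (verit) mult_pos_pos)
  qed
  have uniq: "b = c" if "b \<in> E" "S b = b" "c \<in> E" "S c = c" for b c
  proof -
    have "\<rho> b c \<le> lam * (\<rho> b b + \<rho> c c)" using contr[OF that(1) that(3)] that by simp
    hence "\<rho> b c \<le> 0" using fp0 that by simp
    hence "\<rho> b c = 0" using nonneg that by force
    thus ?thesis using eqI[OF that(1) that(3)] fp0 that by simp
  qed
  obtain x0 where x0: "x0 \<in> E" using M by blast
  define y where "y n = (S ^^ n) x0" for n
  have yE: "y n \<in> E" for n unfolding y_def by (induction n) (auto simp: x0 SE)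
  have ySuc: "y (Suc n) = S (y n)" for n unfolding y_def by simp
  define d where "d n = \<rho> (y n) (y (Suc n))" for n
  define k where "k = lam / (1 - lam)"
  have k0: "k \<ge> 0" and k1: "k < 1" using assms(4,5) unfolding k_def by (auto simp: field_simps)
  have dnn: "d n \<ge> 0" for n unfolding d_def using nonneg yE by blast
  have dstep: "d (Suc n) \<le> k * d n" for n
  proof -
    have "d (Suc n) \<le> lam * (d n + d (Suc n))"
      using contr[OF yE[of n] yE[of "Suc n"]] unfolding d_def ySuc by simp
    hence "(1 - lam) * d (Suc n) \<le> lam * d n" by (simp add: algebra_simps)
    thus ?thesis unfolding k_def using assms(5) by (simp add: field_simps)
  qed
  have dbound: "d n \<le> k ^ n * d 0" for n
  proof (induction n)
    case 0 then show ?case by simp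
  next
    case (Suc n)
    have "d (Suc n) \<le> k * d n" by (rule dstep)
    also have "\<dots> \<le> k * (k ^ n * d 0)" using Suc k0 by (simp add: mult_left_mono)
    finally show ?case by simp
  qed
  have dlim: "d \<longlonglongrightarrow> 0"
  proof (rule tendsto_sandwich[of "\<lambda>_. 0" d sequentially "\<lambda>n. k ^ n * d 0"])
    show "\<forall>\<^sub>F n in sequentially. 0 \<le> d n" using dnn by simp
    show "\<forall>\<^sub>F n in sequentially. d n \<le> k ^ n * d 0" using dbound by simp
    show "(\<lambda>n. 0) \<longlonglongrightarrow> (0::real)" by simp
    have "(\<lambda>n. k ^ n) \<longlonglongrightarrow> 0" using k0 k1 by (intro LIMSEQ_power_zero) simp
    from tendsto_mult[OF this tendsto_const[of "d 0"]]
    show "(\<lambda>n. k ^ n * d 0) \<longlonglongrightarrow> 0" by simp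
  qed
  define x where "x n = y (Suc n)" for n
  have xE: "\<forall>n. x n \<in> E" unfolding x_def using yE by blast
  have xb: "\<rho> (x n) (x m) \<le> lam * (d n + d m)" for n m
    using contr[OF yE[of n] yE[of m]] unfolding x_def d_def ySuc by simp
  have dl: "pvgm_double_lim \<rho> x 0"
    unfolding pvgm_double_lim_def
  proof (rule tendsto_sandwich[of "\<lambda>_. 0" _ _ "\<lambda>p. lam * (d (fst p) + d (snd p))"])
    show "\<forall>\<^sub>F p in sequentially \<times>\<^sub>F sequentially. 0 \<le> (case p of (n, m) \<Rightarrow> \<rho> (x n) (x m))"
      using nonneg xE by (simp add: split_beta)
    show "\<forall>\<^sub>F p in sequentially \<times>\<^sub>F sequentially. (case p of (n, m) \<Rightarrow> \<rho> (x n) (x m)) \<le> lam * (d (fst p) + d (snd p))"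
      using xb by (simp add: split_beta)
    show "((\<lambda>p. 0) \<longlongrightarrow> (0::real)) (sequentially \<times>\<^sub>F sequentially)" by simp
    have a: "((\<lambda>p. d (fst p)) \<longlongrightarrow> 0) (sequentially \<times>\<^sub>F sequentially)"
      by (rule filterlim_compose[OF dlim filtermap_fst_prod_filter[folded filterlim_def]])
    have b: "((\<lambda>p. d (snd p)) \<longlongrightarrow> 0) (sequentially \<times>\<^sub>F sequentially)"
      by (rule filterlim_compose[OF dlim filtermap_snd_prod_filter[folded filterlim_def]])
    from tendsto_mult[OF tendsto_const[of lam] tendsto_add[OF a b]]
    show "((\<lambda>p. lam * (d (fst p) + d (snd p))) \<longlongrightarrow> 0) (sequentially \<times>\<^sub>F sequentially)" by simp
  qed
  hence "pvgm_cauchy \<rho> x" unfolding pvgm_cauchy_def by blast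
  then obtain u where uE: "u \<in> E" and ul: "pvgm_double_lim \<rho> x (\<rho> u u)" and uc: "pvgm_converges \<rho> x u"
    using assms(2) xE unfolding pvgm_complete_def by blast
  have "\<rho> u u = 0"
    using tendsto_unique[of "sequentially \<times>\<^sub>F sequentially"] ul dl
    unfolding pvgm_double_lim_def by (simp add: prod_filter_eq_bot)
  hence xu: "(\<lambda>n. \<rho> u (x n)) \<longlonglongrightarrow> 0" using uc sym uE xE unfolding pvgm_converges_def by simp
  define A where "A = \<rho> u (S u)"
  have A0: "A \<ge> 0" unfolding A_def using nonneg uE SE by blast
  have Ab: "(1 - lam) * A \<le> \<rho> u (x n) + lam * d n" for n
  proof -
    have "A \<le> \<rho> u (x n) + \<rho> (x n) (S u)" unfolding A_def
      using tri[OF assms(1) uE SE[OF uE] xE[rule_format, of n]] .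
    moreover have "\<rho> (x n) (S u) \<le> lam * (d n + A)"
      using contr[OF yE[of n] uE] unfolding x_def d_def A_def ySuc by simp
    ultimately show ?thesis by (simp add: algebra_simps)
  qed
  have "(1 - lam) * A \<le> 0"
  proof (rule tendsto_le[of sequentially "\<lambda>n. \<rho> u (x n) + lam * d n" 0 "\<lambda>_. (1 - lam) * A"])
    show "(\<lambda>n. \<rho> u (x n) + lam * d n) \<longlonglongrightarrow> 0"
      using tendsto_add[OF xu tendsto_mult[OF tendsto_const[of lam] dlim]] by simp
  qed (use Ab in auto)
  moreover have "1 - lam > 0" using assms(5) by simp
  ultimately have "A \<le> 0" by (simp add: mult_le_0_iff)
  hence "A = 0" using A0 by simp
  hence "S u = u"
    using eqI[OF uE SE[OF uE]] small[OF SE[OF uE] uE] sym[OF uE SE[OF uE]] nonneg[OF SE[OF uE] SE[OF uE]]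
      \<open>\<rho> u u = 0\<close> unfolding A_def by force
  show ?thesis using uniq fp0 \<open>S u = u\<close> uE by blast
qed

end
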